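(* Let $b,f\in C^2(\overline I)$ with $0<\underline b\le b\le\overline b$ on $\overline I$, and for $\varepsilon\in(0,1]$ let $u_\varepsilon$ be the solution of the model problem. There are constants $C,c>0$ independent of $\varepsilon$ and $N$ such that for every integer $N\ge2$ and every $\varepsilon\in(0,1]$ $$\inf_{\Phi\in\mathcal{NN}^{\mathrm{ReLU}}_{2,cN,1,1}}\|u_\varepsilon-\mathrm R(\Phi)\|_{1,\varepsilon,I}\le CN^{-1}\log N,\qquad \inf_{\Phi\in\mathcal{NN}^{\mathrm{ReLU}}_{2,cN,1,1}}\|u_\varepsilon-\mathrm R(\Phi)\|_{L^2(I)}\le C(N^{-1}\log N)^2.$$
   Context: $I=(-1,1)$; model problem: $-\varepsilon^2u''+bu=f$ in $I$, $u(\pm1)=0$. Energy norm $\|w\|_{1,\varepsilon,I}^2=\int_I(\varepsilon^2(w')^2+bw^2)dx$. $\mathcal{NN}^{\mathrm{ReLU}}_{L,W,d,N_L}$ denotes feedforward networks $\Phi=((A_1,b_1),\dots,(A_L,b_L))$ of depth $L$, width at most $W$, input dimension $d$, output dimension $N_L$, with realization $\mathrm R(\Phi)$ given by alternating affine maps and componentwise ReLU $\max\{0,\cdot\}$ in the hidden layers (no activation in the last layer). *)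

theory Defs
  imports "HOL-Analysis.Analysis"
begin

text \<open>A layer is a pair (A, b) of a weight matrix and a bias vector; vectors are
  functions nat => real, matrices nat => nat => real. A network is a pair (ns, ls)
  where ns = [N_0, ..., N_L] are the layer dimensions and ls = [(A_1,b_1),...,(A_L,b_L)].
  Layer l maps R^(N_(l-1)) to R^(N_l); only entries within these dimensions matter.\<close>

type_synonym layer = "(nat \<Rightarrow> nat \<Rightarrow> real) \<times> (nat \<Rightarrow> real)"
type_synonym network = "nat list \<times> layer list"

definition affine :: "nat \<Rightarrow> nat \<Rightarrow> layer \<Rightarrow> (nat \<Rightarrow> real) \<Rightarrow> (nat \<Rightarrow> real)" where
  "affine m n l x = (\<lambda>i. if i < m then (\<Sum>j<n. fst l i j * x j) + snd l i else 0)"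

definition relu :: "(nat \<Rightarrow> real) \<Rightarrow> (nat \<Rightarrow> real)" where
  "relu x = (\<lambda>i. max 0 (x i))"

fun realize :: "nat list \<Rightarrow> layer list \<Rightarrow> (nat \<Rightarrow> real) \<Rightarrow> (nat \<Rightarrow> real)" where
  "realize (n # m # ns) (l # ls) x =
     (if ls = [] then affine m n l x else realize (m # ns) ls (relu (affine m n l x)))"
| "realize _ _ x = x"

definition NN :: "nat \<Rightarrow> nat \<Rightarrow> nat \<Rightarrow> nat \<Rightarrow> network set" where
  "NN L W d NL = {(ns, ls). L \<ge> 1 \<and> length ls = L \<and> length ns = L + 1 \<and>
      hd ns = d \<and> last ns = NL \<and> (\<forall>k\<in>set ns. k \<le> W)}"

definition R :: "network \<Rightarrow> real \<Rightarrow> real" where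
  "R \<Phi> x = realize (fst \<Phi>) (snd \<Phi>) (\<lambda>_. x) 0"

definition energy_norm :: "real \<Rightarrow> (real \<Rightarrow> real) \<Rightarrow> (real \<Rightarrow> real) \<Rightarrow> real" where
  "energy_norm \<epsilon> b w =
     sqrt (\<integral>x\<in>{-1<..<1}. (\<epsilon>\<^sup>2 * (deriv w x)\<^sup>2 + b x * (w x)\<^sup>2) \<partial>lborel)"

definition L2_norm_I :: "(real \<Rightarrow> real) \<Rightarrow> real" where
  "L2_norm_I w = sqrt (\<integral>x\<in>{-1<..<1}. (w x)\<^sup>2 \<partial>lborel)"

definition C2_on :: "(real \<Rightarrow> real) \<Rightarrow> real set \<Rightarrow> bool" where
  "C2_on g S \<longleftrightarrow> (\<exists>g' g''. (\<forall>x\<in>S. (g has_real_derivative g' x) (at x within S)) \<and>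
      (\<forall>x\<in>S. (g' has_real_derivative g'' x) (at x within S)) \<and> continuous_on S g'')"

definition is_solution :: "real \<Rightarrow> (real \<Rightarrow> real) \<Rightarrow> (real \<Rightarrow> real) \<Rightarrow> (real \<Rightarrow> real) \<Rightarrow> bool" where
  "is_solution \<epsilon> b f u \<longleftrightarrow> continuous_on {-1..1} u \<and> u (-1) = 0 \<and> u 1 = 0 \<and>
     (\<exists>u' u''. \<forall>x\<in>{-1<..<1}. (u has_real_derivative u' x) (at x) \<and>
        (u' has_real_derivative u'' x) (at x) \<and>
        - \<epsilon>\<^sup>2 * u'' x + b x * u x = f x)"

end

theory Submission
  imports Defs "HOL-Analysis.Analysis"
begin


lemma quot_C2:
  fixes f b :: "real \<Rightarrow> real"
  assumes "C2_on b {-1..1}" "C2_on f {-1..1}" "\<And>x. x \<in> {-1..1} \<Longrightarrow> b x > 0"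
  shows "\<exists>g1 g2 G. G \<ge> 0 \<and> continuous_on {-1..1} (\<lambda>x. f x / b x) \<and>
     (\<forall>x\<in>{-1<..<1}. ((\<lambda>x. f x / b x) has_real_derivative g1 x) (at x) \<and>
        (g1 has_real_derivative g2 x) (at x) \<and> \<bar>g2 x\<bar> \<le> G)"
proof -
  let ?S = "{-1..1::real}"
  obtain b1 b2 where b1: "\<forall>x\<in>?S. (b has_real_derivative b1 x) (at x within ?S)"
    and b2: "\<forall>x\<in>?S. (b1 has_real_derivative b2 x) (at x within ?S)" and cb2: "continuous_on ?S b2"
    using assms(1) unfolding C2_on_def by blast
  obtain f1 f2 where f1: "\<forall>x\<in>?S. (f has_real_derivative f1 x) (at x within ?S)"
    and f2: "\<forall>x\<in>?S. (f1 has_real_derivative f2 x) (at x within ?S)" and cf2: "continuous_on ?S f2"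
    using assms(2) unfolding C2_on_def by blast
  have cb: "continuous_on ?S b" using b1 DERIV_continuous_on by blast
  have cb1: "continuous_on ?S b1" using b2 DERIV_continuous_on by blast
  have cf: "continuous_on ?S f" using f1 DERIV_continuous_on by blast
  have cf1: "continuous_on ?S f1" using f2 DERIV_continuous_on by blast
  define r where "r x = inverse (b x)" for x
  define r1 where "r1 x = - (b1 x * r x * r x)" for x
  define r2 where "r2 x = - (b2 x * r x * r x + b1 x * r1 x * r x + b1 x * r x * r1 x)" for x
  define g1 where "g1 x = f1 x * r x + f x * r1 x" for x
  define g2 where "g2 x = f2 x * r x + f1 x * r1 x + f1 x * r1 x + f x * r2 x" for x
  have nz: "\<And>x. x \<in> ?S \<Longrightarrow> b x \<noteq> 0" using assms(3) by force
  have cr: "continuous_on ?S r" unfolding r_def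
    by (intro continuous_intros cb) (auto dest: nz)
  have cg2: "continuous_on ?S g2" unfolding g2_def r2_def r1_def
    by (intro continuous_intros cb cb1 cf cf1 cf2 cb2 cr)
  obtain G where G: "G \<ge> 0" "\<And>x. x \<in> ?S \<Longrightarrow> norm (g2 x) \<le> G"
    using continuous_on_compact_bound[OF compact_Icc cg2] by blast
  have cg: "continuous_on ?S (\<lambda>x. f x / b x)"
    by (intro continuous_intros cb cf) (auto dest: nz)
  have "\<forall>x\<in>{-1<..<1}. ((\<lambda>x. f x / b x) has_real_derivative g1 x) (at x) \<and>
        (g1 has_real_derivative g2 x) (at x) \<and> \<bar>g2 x\<bar> \<le> G"
  proof
    fix x :: real assume x: "x \<in> {-1<..<1}"
    then have xS: "x \<in> ?S" by auto
    have opn: "open {-1<..<1::real}" by simp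
    have R1: "(r has_real_derivative r1 y) (at y)" if "y \<in> {-1<..<1}" for y
    proof -
      have yS: "y \<in> ?S" using that by auto
      have at: "at y within ?S = at y" using that by (metis at_within_interior interior_atLeastAtMost_real)
      have B1: "(b has_real_derivative b1 y) (at y)" using b1 yS at by metis
      show ?thesis unfolding r_def[abs_def] r1_def r_def
        using nz[OF yS]
        by (auto intro!: derivative_eq_intros B1 simp: power2_eq_square)
    qed
    have R1': "(r1 has_real_derivative r2 y) (at y)" if "y \<in> {-1<..<1}" for y
    proof -
      have yS: "y \<in> ?S" using that by auto
      have at: "at y within ?S = at y" using that by (metis at_within_interior interior_atLeastAtMost_real)
      have B2: "(b1 has_real_derivative b2 y) (at y)" using b2 yS at by metis
      have "((\<lambda>y. - (b1 y * r y * r y)) has_real_derivative r2 y) (at y)"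
        unfolding r2_def
        by (rule derivative_eq_intros B2 R1[OF that] refl)+ (simp add: algebra_simps)
      then show ?thesis unfolding r1_def[abs_def] .
    qed
    have at: "at x within ?S = at x" using x by (metis at_within_interior interior_atLeastAtMost_real)
    have F1: "(f has_real_derivative f1 x) (at x)" using f1 xS at by metis
    have F2: "(f1 has_real_derivative f2 x) (at x)" using f2 xS at by metis
    have "((\<lambda>x. f x * r x) has_real_derivative g1 x) (at x)"
      unfolding g1_def
      by (rule derivative_eq_intros F1 R1[OF x] refl)+ (simp add: algebra_simps)
    then have D1: "((\<lambda>x. f x / b x) has_real_derivative g1 x) (at x)"
      unfolding r_def divide_inverse .
    have D2: "(g1 has_real_derivative g2 x) (at x)"
      unfolding g1_def[abs_def] g2_def
      by (rule derivative_eq_intros F1 F2 R1[OF x] R1'[OF x] refl)+ (simp add: algebra_simps)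
    have "\<bar>g2 x\<bar> \<le> G" using G(2)[OF xS] by simp
    with D1 D2 show "((\<lambda>x. f x / b x) has_real_derivative g1 x) (at x) \<and>
        (g1 has_real_derivative g2 x) (at x) \<and> \<bar>g2 x\<bar> \<le> G" by blast
  qed
  with G cg show ?thesis by blast
qed



lemma max_principle:
  fixes w w1 w2 :: "real \<Rightarrow> real"
  assumes cont: "continuous_on {-1..1} w" and bd: "w (-1) \<ge> 0" "w 1 \<ge> 0"
    and d: "\<And>x. x \<in> {-1<..<1} \<Longrightarrow> (w has_real_derivative w1 x) (at x) \<and> (w1 has_real_derivative w2 x) (at x)"
    and L: "\<And>x. x \<in> {-1<..<1} \<Longrightarrow> w x < 0 \<Longrightarrow> w2 x < 0"
  shows "\<forall>x\<in>{-1..1}. w x \<ge> 0"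
proof (rule ccontr)
  assume "\<not> (\<forall>x\<in>{-1..1}. w x \<ge> 0)"
  then obtain x1 where x1: "x1 \<in> {-1..1}" "w x1 < 0" by force
  obtain x0 where x0: "x0 \<in> {-1..1}" "\<forall>y\<in>{-1..1}. w x0 \<le> w y"
    using continuous_attains_inf[OF compact_Icc _ cont] by force
  have neg: "w x0 < 0" using x0 x1 by force
  have x0i: "x0 \<in> {-1<..<1}" using x0(1) neg bd by (cases "x0 = -1"; cases "x0 = 1") auto
  have D1: "(w has_real_derivative w1 x0) (at x0)" and D2: "(w1 has_real_derivative w2 x0) (at x0)"
    using d[OF x0i] by auto
  have "w1 x0 = 0"
  proof (rule DERIV_local_min[OF D1])
    show "0 < min (x0 + 1) (1 - x0)" using x0i by auto
    show "\<forall>y. \<bar>x0 - y\<bar> < min (x0 + 1) (1 - x0) \<longrightarrow> w x0 \<le> w y"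
      using x0(2) by (auto simp: abs_if split: if_splits)
  qed
  moreover have "w2 x0 < 0" using L[OF x0i neg] .
  ultimately obtain dd where dd: "dd > 0" "\<forall>h>0. h < dd \<longrightarrow> w1 (x0 + h) < 0"
    using DERIV_neg_dec_right[OF D2] by force
  define m where "m = min dd (1 - x0)"
  define h where "h = m / 2"
  have hm: "m \<le> dd" "m \<le> 1 - x0" "m > 0" using dd x0i by (auto simp: m_def)
  have h1: "0 < h" using hm unfolding h_def by linarith
  have h2: "h < dd" using hm unfolding h_def by linarith
  have h3: "x0 + h < 1" using hm unfolding h_def by linarith
  note h = h1 h2 h3
  obtain z where z: "x0 < z" "z < x0 + h" "w (x0 + h) - w x0 = (x0 + h - x0) * w1 z"
    using MVT2[of x0 "x0 + h" w w1] h x0i d by force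
  have "w1 z < 0" using dd(2)[rule_format, of "z - x0"] z h by auto
  then have "h * w1 z < 0" using h1 by (simp add: mult_pos_neg)
  then have "w (x0 + h) < w x0" using z by simp
  moreover have "x0 + h \<in> {-1..1}" using h x0i by auto
  ultimately show False using x0(2) by force
qed

lemma barrier_bound:
  fixes v v1 v2 q b :: "real \<Rightarrow> real" and \<epsilon> b_lo G B :: real
  assumes blo: "0 < b_lo" "\<And>x. x \<in> {-1..1} \<Longrightarrow> b_lo \<le> b x" and eps: "0 < \<epsilon>"
    and cont: "continuous_on {-1..1} v"
    and d: "\<And>x. x \<in> {-1<..<1} \<Longrightarrow> (v has_real_derivative v1 x) (at x) \<and> (v1 has_real_derivative v2 x) (at x)
        \<and> - \<epsilon>\<^sup>2 * v2 x + b x * v x = \<epsilon>\<^sup>2 * q x \<and> \<bar>q x\<bar> \<le> G"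
    and bdv: "\<bar>v (-1)\<bar> \<le> B" "\<bar>v 1\<bar> \<le> B" and G0: "G \<ge> 0"
  shows "\<forall>x\<in>{-1..1}. \<bar>v x\<bar> \<le> (G / b_lo) * \<epsilon>\<^sup>2 +
     B * (exp (- (sqrt b_lo * (1 + x)) / \<epsilon>) + exp (- (sqrt b_lo * (1 - x)) / \<epsilon>))"
proof -
  define \<beta> where "\<beta> = sqrt b_lo"
  have \<beta>2: "\<beta>\<^sup>2 = b_lo" using blo by (simp add: \<beta>_def)
  have B0: "B \<ge> 0" using bdv by linarith
  define k where "k = \<beta> / \<epsilon>"
  define E where "E x = exp (- k * (1 + x)) + exp (- k * (1 - x))" for x
  define E1 where "E1 x = exp (- k * (1 + x)) * (- k) + exp (- k * (1 - x)) * k" for x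
  define \<phi> where "\<phi> x = (G / b_lo) * \<epsilon>\<^sup>2 + B * E x" for x
  have E0: "E x > 0" for x unfolding E_def by (intro add_pos_pos) auto
  have dE: "(E has_real_derivative E1 x) (at x)" for x
    unfolding E_def[abs_def] E1_def
    by (rule derivative_eq_intros refl)+ simp
  have dE1: "(E1 has_real_derivative (\<beta> / \<epsilon>)\<^sup>2 * E x) (at x)" for x
    unfolding E1_def[abs_def] E_def
    by (rule derivative_eq_intros refl)+ (simp add: k_def algebra_simps power2_eq_square)
  have dphi: "(\<phi> has_real_derivative B * E1 x) (at x)" for x
    unfolding \<phi>_def[abs_def] by (rule derivative_eq_intros dE refl)+ simp
  have dphi1: "((\<lambda>x. B * E1 x) has_real_derivative B * ((\<beta> / \<epsilon>)\<^sup>2 * E x)) (at x)" for x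
    by (rule derivative_eq_intros dE1 refl)+ (simp add: algebra_simps)
  have cphi: "continuous_on {-1..1} \<phi>" unfolding \<phi>_def E_def by (intro continuous_intros)
  have Lphi: "\<epsilon>\<^sup>2 * (B * ((\<beta> / \<epsilon>)\<^sup>2 * E x)) = b_lo * B * E x" for x
    using eps \<beta>2 by (simp add: field_simps power2_eq_square)
  have phi_lo: "b x * \<phi> x \<ge> G * \<epsilon>\<^sup>2 + b_lo * B * E x" if "x \<in> {-1..1}" for x
  proof -
    have p0: "\<phi> x \<ge> 0" unfolding \<phi>_def using blo B0 E0[of x] G0 by (auto intro!: add_nonneg_nonneg)
    have "b x * \<phi> x \<ge> b_lo * \<phi> x"
      by (rule mult_right_mono[OF blo(2)[OF that] p0])
    moreover have "b_lo * \<phi> x = G * \<epsilon>\<^sup>2 + b_lo * B * E x"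
      unfolding \<phi>_def using blo by (simp add: field_simps)
    ultimately show ?thesis by simp
  qed
  have bpos: "b x > 0" if "x \<in> {-1..1}" for x using blo(1) blo(2)[OF that] by linarith
  have e2: "\<epsilon>\<^sup>2 > 0" using eps by simp
  have bnd_phi: "\<phi> y \<ge> B" if "y = -1 \<or> y = 1" for y
  proof -
    have "E y \<ge> 1" using that unfolding E_def by auto
    then have "B * E y \<ge> B" using B0 by (simp add: mult_le_cancel_left1)
    moreover have "(G / b_lo) * \<epsilon>\<^sup>2 \<ge> 0" using G0 blo by simp
    ultimately show ?thesis unfolding \<phi>_def by linarith
  qed
  have m1: "\<forall>x\<in>{-1..1}. (\<lambda>x. \<phi> x - v x) x \<ge> 0"
  proof (rule max_principle[of "\<lambda>x. \<phi> x - v x" "\<lambda>x. B * E1 x - v1 x" "\<lambda>x. B * ((\<beta> / \<epsilon>)\<^sup>2 * E x) - v2 x"])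
    show "continuous_on {-1..1} (\<lambda>x. \<phi> x - v x)" by (intro continuous_intros cphi cont)
    show "0 \<le> \<phi> (- 1) - v (- 1)" using bnd_phi[of "-1"] bdv by linarith
    show "0 \<le> \<phi> 1 - v 1" using bnd_phi[of "1"] bdv by linarith
    fix x :: real assume x: "x \<in> {-1<..<1}"
    show "((\<lambda>x. \<phi> x - v x) has_real_derivative B * E1 x - v1 x) (at x) \<and>
      ((\<lambda>x. B * E1 x - v1 x) has_real_derivative B * ((\<beta> / \<epsilon>)\<^sup>2 * E x) - v2 x) (at x)"
      using d[OF x] by (auto intro!: derivative_eq_intros dphi dphi1 dE1)
    assume neg: "\<phi> x - v x < 0"
    have xS: "x \<in> {-1..1}" using x by auto
    have eq: "\<epsilon>\<^sup>2 * v2 x = b x * v x - \<epsilon>\<^sup>2 * q x" using d[OF x] by linarith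
    have "b x * v x > b x * \<phi> x" using neg bpos[OF xS] by simp
    then have "b x * v x > G * \<epsilon>\<^sup>2 + b_lo * B * E x" using phi_lo[OF xS] by linarith
    moreover have "\<epsilon>\<^sup>2 * q x \<le> G * \<epsilon>\<^sup>2" using d[OF x] e2 by (subst mult.commute, intro mult_left_mono) auto
    ultimately have "\<epsilon>\<^sup>2 * (B * ((\<beta> / \<epsilon>)\<^sup>2 * E x)) - \<epsilon>\<^sup>2 * v2 x < 0"
      using Lphi[of x] eq by linarith
    then have "\<epsilon>\<^sup>2 * (B * ((\<beta> / \<epsilon>)\<^sup>2 * E x) - v2 x) < 0"
      by (simp add: right_diff_distrib)
    then show "B * ((\<beta> / \<epsilon>)\<^sup>2 * E x) - v2 x < 0" using e2 by (simp add: mult_less_0_iff)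
  qed
  have m2: "\<forall>x\<in>{-1..1}. (\<lambda>x. \<phi> x + v x) x \<ge> 0"
  proof (rule max_principle[of "\<lambda>x. \<phi> x + v x" "\<lambda>x. B * E1 x + v1 x" "\<lambda>x. B * ((\<beta> / \<epsilon>)\<^sup>2 * E x) + v2 x"])
    show "continuous_on {-1..1} (\<lambda>x. \<phi> x + v x)" by (intro continuous_intros cphi cont)
    show "0 \<le> \<phi> (- 1) + v (- 1)" using bnd_phi[of "-1"] bdv by linarith
    show "0 \<le> \<phi> 1 + v 1" using bnd_phi[of "1"] bdv by linarith
    fix x :: real assume x: "x \<in> {-1<..<1}"
    show "((\<lambda>x. \<phi> x + v x) has_real_derivative B * E1 x + v1 x) (at x) \<and>
      ((\<lambda>x. B * E1 x + v1 x) has_real_derivative B * ((\<beta> / \<epsilon>)\<^sup>2 * E x) + v2 x) (at x)"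
      using d[OF x] by (auto intro!: derivative_eq_intros dphi dphi1 dE1)
    assume neg: "\<phi> x + v x < 0"
    have xS: "x \<in> {-1..1}" using x by auto
    have eq: "\<epsilon>\<^sup>2 * v2 x = b x * v x - \<epsilon>\<^sup>2 * q x" using d[OF x] by linarith
    have "b x * (- v x) > b x * \<phi> x" using neg bpos[OF xS] by (intro mult_strict_left_mono) auto
    then have "b x * (- v x) > G * \<epsilon>\<^sup>2 + b_lo * B * E x" using phi_lo[OF xS] by linarith
    moreover have "- (\<epsilon>\<^sup>2 * q x) \<le> G * \<epsilon>\<^sup>2" using d[OF x] e2
      by (metis abs_le_D2 minus_mult_right mult_left_mono less_imp_le mult.commute)
    ultimately have "\<epsilon>\<^sup>2 * (B * ((\<beta> / \<epsilon>)\<^sup>2 * E x)) + \<epsilon>\<^sup>2 * v2 x < 0"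
      using Lphi[of x] eq by linarith
    then have "\<epsilon>\<^sup>2 * (B * ((\<beta> / \<epsilon>)\<^sup>2 * E x) + v2 x) < 0"
      by (simp add: distrib_left)
    then show "B * ((\<beta> / \<epsilon>)\<^sup>2 * E x) + v2 x < 0" using e2 by (simp add: mult_less_0_iff)
  qed
  show ?thesis
  proof
    fix x :: real assume "x \<in> {-1..1}"
    then have "\<bar>v x\<bar> \<le> \<phi> x" using m1 m2 by force
    then show "\<bar>v x\<bar> \<le> (G / b_lo) * \<epsilon>\<^sup>2 +
     B * (exp (- (sqrt b_lo * (1 + x)) / \<epsilon>) + exp (- (sqrt b_lo * (1 - x)) / \<epsilon>))"
    proof -
      have "- k * (1 + x) = - (sqrt b_lo * (1 + x)) / \<epsilon>" "- k * (1 - x) = - (sqrt b_lo * (1 - x)) / \<epsilon>"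
        by (simp_all add: k_def \<beta>_def)
      then show ?thesis using \<open>\<bar>v x\<bar> \<le> \<phi> x\<close> unfolding \<phi>_def E_def by simp
    qed
  qed
qed



lemma lip_bound:
  fixes \<phi> \<phi>1 :: "real \<Rightarrow> real"
  assumes "\<And>z. min x y \<le> z \<Longrightarrow> z \<le> max x y \<Longrightarrow> (\<phi> has_real_derivative \<phi>1 z) (at z) \<and> \<bar>\<phi>1 z\<bar> \<le> M"
  shows "\<bar>\<phi> y - \<phi> x\<bar> \<le> M * \<bar>y - x\<bar>"
proof (cases x y rule: linorder_cases)
  case less
  obtain z where z: "x < z" "z < y" "\<phi> y - \<phi> x = (y - x) * \<phi>1 z"
    using MVT2[OF less, of \<phi> \<phi>1] assms less by force
  have "\<bar>\<phi>1 z\<bar> \<le> M" using assms[of z] z less by auto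
  then show ?thesis using z less by (simp add: abs_mult mult.commute mult_left_mono)
next
  case equal then show ?thesis by simp
next
  case greater
  obtain z where z: "y < z" "z < x" "\<phi> x - \<phi> y = (x - y) * \<phi>1 z"
    using MVT2[OF greater, of \<phi> \<phi>1] assms greater by force
  have "\<bar>\<phi>1 z\<bar> \<le> M" using assms[of z] z greater by auto
  then have "\<bar>\<phi> x - \<phi> y\<bar> \<le> M * \<bar>x - y\<bar>" using z greater by (simp add: abs_mult mult.commute mult_left_mono)
  then show ?thesis by (simp add: abs_minus_commute)
qed

lemma interp_err:
  fixes \<phi> \<phi>1 \<phi>2 :: "real \<Rightarrow> real"
  assumes ac: "a < c" and cont: "continuous_on {a..c} \<phi>"
    and d: "\<And>x. x \<in> {a<..<c} \<Longrightarrow> (\<phi> has_real_derivative \<phi>1 x) (at x) \<and> (\<phi>1 has_real_derivative \<phi>2 x) (at x) \<and> \<bar>\<phi>2 x\<bar> \<le> M"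
  shows "\<forall>x\<in>{a<..<c}. \<bar>\<phi>1 x - (\<phi> c - \<phi> a) / (c - a)\<bar> \<le> M * (c - a)"
    and "\<forall>x\<in>{a..c}. \<bar>\<phi> x - (\<phi> a + (\<phi> c - \<phi> a) / (c - a) * (x - a))\<bar> \<le> M * (c - a)\<^sup>2"
proof -
  define s where "s = (\<phi> c - \<phi> a) / (c - a)"
  have M0: "M \<ge> 0" using d[of "(a + c) / 2"] ac by force
  obtain l \<xi> where \<xi>: "a < \<xi>" "\<xi> < c" "(\<phi> has_real_derivative l) (at \<xi>)" "\<phi> c - \<phi> a = (c - a) * l"
    using MVT[OF ac cont] d real_differentiable_def by (metis greaterThanLessThan_iff)
  have "l = \<phi>1 \<xi>" using \<xi> d[of \<xi>] DERIV_unique by force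
  then have s\<xi>: "s = \<phi>1 \<xi>" using \<xi>(4) ac by (simp add: s_def)
  have D1: "\<forall>x\<in>{a<..<c}. \<bar>\<phi>1 x - s\<bar> \<le> M * (c - a)"
  proof
    fix x assume x: "x \<in> {a<..<c}"
    have "\<bar>\<phi>1 x - \<phi>1 \<xi>\<bar> \<le> M * \<bar>x - \<xi>\<bar>"
      by (rule lip_bound[of \<xi> x \<phi>1 \<phi>2 M]) (use d x \<xi> in \<open>auto simp: min_def max_def split: if_splits\<close>)
    also have "\<dots> \<le> M * (c - a)" using x \<xi> M0 by (intro mult_left_mono) auto
    finally show "\<bar>\<phi>1 x - s\<bar> \<le> M * (c - a)" using s\<xi> by simp
  qed
  then show "\<forall>x\<in>{a<..<c}. \<bar>\<phi>1 x - (\<phi> c - \<phi> a) / (c - a)\<bar> \<le> M * (c - a)" by (simp add: s_def)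
  define e where "e y = \<phi> y - (\<phi> a + s * (y - a))" for y
  have "\<bar>e x\<bar> \<le> M * (c - a)\<^sup>2" if x: "x \<in> {a..c}" for x
  proof (cases "x = a")
    case True then show ?thesis using M0 by (simp add: e_def)
  next
    case False
    then have ax: "a < x" using x by auto
    have ce: "continuous_on {a..x} e" unfolding e_def
      by (intro continuous_intros continuous_on_subset[OF cont]) (use x in auto)
    have de: "(e has_real_derivative \<phi>1 z - s) (at z)" if "a < z" "z < x" for z
      unfolding e_def[abs_def] using d[of z] that x
      by (auto intro!: derivative_eq_intros)
    obtain l z where z: "a < z" "z < x" "(e has_real_derivative l) (at z)" "e x - e a = (x - a) * l"
      using MVT[OF ax ce] de real_differentiable_def by metis
    have "l = \<phi>1 z - s" using de[OF z(1,2)] z(3) DERIV_unique by blast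
    moreover have "\<bar>\<phi>1 z - s\<bar> \<le> M * (c - a)" using D1 z x by auto
    moreover have "e a = 0" by (simp add: e_def)
    ultimately have "\<bar>e x\<bar> \<le> (x - a) * (M * (c - a))" using z ax
      by (simp add: abs_mult mult_left_mono)
    also have "\<dots> \<le> (c - a) * (M * (c - a))" using x M0 ac by (intro mult_right_mono) auto
    finally show ?thesis by (simp add: power2_eq_square mult_ac)
  qed
  then show "\<forall>x\<in>{a..c}. \<bar>\<phi> x - (\<phi> a + (\<phi> c - \<phi> a) / (c - a) * (x - a))\<bar> \<le> M * (c - a)\<^sup>2"
    by (simp add: e_def s_def)
qed

lemma landau:
  fixes \<phi> \<phi>1 \<phi>2 :: "real \<Rightarrow> real"
  assumes yw: "y \<noteq> w"
    and d: "\<And>z. min y w \<le> z \<Longrightarrow> z \<le> max y w \<Longrightarrow> (\<phi> has_real_derivative \<phi>1 z) (at z) \<and>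
        (\<phi>1 has_real_derivative \<phi>2 z) (at z) \<and> \<bar>\<phi> z\<bar> \<le> K \<and> \<bar>\<phi>2 z\<bar> \<le> M"
  shows "\<bar>\<phi>1 y\<bar> \<le> 2 * K / \<bar>w - y\<bar> + M * \<bar>w - y\<bar>"
proof -
  have "\<exists>\<xi>. min y w < \<xi> \<and> \<xi> < max y w \<and> \<phi> w - \<phi> y = (w - y) * \<phi>1 \<xi>"
  proof (cases "y < w")
    case True
    then show ?thesis using MVT2[OF True, of \<phi> \<phi>1] d by (auto simp: min_def max_def)
  next
    case False
    then have wy: "w < y" using yw by auto
    obtain \<xi> where "w < \<xi>" "\<xi> < y" "\<phi> y - \<phi> w = (y - w) * \<phi>1 \<xi>"
      using MVT2[OF wy, of \<phi> \<phi>1] d wy by (force simp: min_def max_def)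
    then show ?thesis using wy by (intro exI[of _ \<xi>]) (auto simp: min_def max_def algebra_simps)
  qed
  then obtain \<xi> where \<xi>: "min y w < \<xi>" "\<xi> < max y w" "\<phi> w - \<phi> y = (w - y) * \<phi>1 \<xi>" by blast
  have pos: "\<bar>w - y\<bar> > 0" using yw by simp
  have "\<bar>w - y\<bar> * \<bar>\<phi>1 \<xi>\<bar> \<le> 2 * K"
  proof -
    have "\<bar>\<phi> w\<bar> \<le> K" "\<bar>\<phi> y\<bar> \<le> K" using d[of w] d[of y] by auto
    then have "\<bar>\<phi> w - \<phi> y\<bar> \<le> 2 * K" by linarith
    then show ?thesis using \<xi>(3) by (simp add: abs_mult)
  qed
  then have A: "\<bar>\<phi>1 \<xi>\<bar> \<le> 2 * K / \<bar>w - y\<bar>" using pos by (simp add: field_simps)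
  have "\<bar>\<phi>1 \<xi> - \<phi>1 y\<bar> \<le> M * \<bar>\<xi> - y\<bar>"
    by (rule lip_bound[of y \<xi> \<phi>1 \<phi>2 M]) (use d \<xi> in \<open>auto simp: min_def max_def split: if_splits\<close>)
  also have "\<dots> \<le> M * \<bar>w - y\<bar>"
  proof -
    have M0: "M \<ge> 0" using d[of y] by force
    have "\<bar>\<xi> - y\<bar> \<le> \<bar>w - y\<bar>" using \<xi> by (auto simp: min_def max_def split: if_splits)
    then show ?thesis using M0 by (simp add: mult_left_mono)
  qed
  finally show ?thesis using A by linarith
qed



definition slope :: "(nat \<Rightarrow> real) \<Rightarrow> (nat \<Rightarrow> real) \<Rightarrow> nat \<Rightarrow> real" where
  "slope t p j = (p (Suc j) - p j) / (t (Suc j) - t j)"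

definition coef :: "(nat \<Rightarrow> real) \<Rightarrow> (nat \<Rightarrow> real) \<Rightarrow> nat \<Rightarrow> real" where
  "coef t p j = (if j = 0 then slope t p 0 else slope t p j - slope t p (j - 1))"

definition net :: "(nat \<Rightarrow> real) \<Rightarrow> (nat \<Rightarrow> real) \<Rightarrow> nat \<Rightarrow> network" where
  "net t p n = ([1, n, 1], [(\<lambda>i j. 1, \<lambda>i. - t i), (\<lambda>i j. coef t p j, \<lambda>i. p 0)])"

lemma R_net: "R (net t p n) x = p 0 + (\<Sum>j<n. coef t p j * max 0 (x - t j))"
  unfolding R_def net_def by (simp add: affine_def relu_def algebra_simps)

lemma net_in_NN: "1 \<le> n \<Longrightarrow> n \<le> W \<Longrightarrow> net t p n \<in> NN 2 W 1 1"
  unfolding net_def NN_def by auto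

lemma coef_sum: "(\<Sum>j\<le>k. coef t p j * (x - t j)) = slope t p k * (x - t k) + p k - p 0"
  if "strict_mono t" for t p k x
proof (induction k)
  case 0 then show ?case by (simp add: coef_def)
next
  case (Suc k)
  have ne: "t (Suc k) - t k \<noteq> 0" using that strict_monoD[OF that, of k "Suc k"] by simp
  have "(\<Sum>j\<le>Suc k. coef t p j * (x - t j)) = slope t p k * (x - t k) + p k - p 0
      + (slope t p (Suc k) - slope t p k) * (x - t (Suc k))"
    using Suc by (simp add: coef_def)
  also have "\<dots> = slope t p (Suc k) * (x - t (Suc k)) + p (Suc k) - p 0"
  proof -
    have "slope t p k * (t (Suc k) - t k) = p (Suc k) - p k" using ne by (simp add: slope_def)
    then show ?thesis by (simp add: algebra_simps)
  qed
  finally show ?case .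
qed

lemma PL_on_elem:
  assumes sm: "strict_mono t" and k: "k < n" and x: "t k \<le> x" "x \<le> t (Suc k)"
  shows "p 0 + (\<Sum>j<n. coef t p j * max 0 (x - t j)) = p k + slope t p k * (x - t k)"
proof -
  have "(\<Sum>j<n. coef t p j * max 0 (x - t j)) = (\<Sum>j<n. if j \<le> k then coef t p j * (x - t j) else 0)"
  proof (rule sum.cong[OF refl])
    fix j assume "j \<in> {..<n}"
    show "coef t p j * max 0 (x - t j) = (if j \<le> k then coef t p j * (x - t j) else 0)"
    proof (cases "j \<le> k")
      case True
      then have "t j \<le> t k" using sm by (simp add: strict_mono_less_eq)
      then show ?thesis using True x by simp
    next
      case False
      then have "t (Suc k) \<le> t j" using sm by (simp add: strict_mono_less_eq)
      then show ?thesis using False x by simp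
    qed
  qed
  also have "\<dots> = (\<Sum>j\<in>{..<n} \<inter> {..k}. coef t p j * (x - t j))"
    by (simp add: sum.inter_restrict if_distrib atMost_def)
  also have "{..<n} \<inter> {..k} = {..k}" using k by auto
  finally show ?thesis using coef_sum[OF sm] by simp
qed

lemma R_net_elem:
  assumes sm: "strict_mono t" and k: "k < n" and x: "t k \<le> x" "x \<le> t (Suc k)"
  shows "R (net t p n) x = p k + slope t p k * (x - t k)"
  using PL_on_elem[OF assms] R_net by simp

lemma R_net_deriv:
  assumes sm: "strict_mono t" and k: "k < n" and x: "t k < x" "x < t (Suc k)"
  shows "(R (net t p n) has_real_derivative slope t p k) (at x)"
proof -
  have "((\<lambda>y. p k + slope t p k * (y - t k)) has_real_derivative slope t p k) (at x)"
    by (rule derivative_eq_intros refl)+ simp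
  then show ?thesis
    by (rule has_field_derivative_transform_within_open[where S = "{t k<..<t (Suc k)}"])
       (use x R_net_elem[OF sm k] in auto)
qed

lemma find_elem:
  fixes t :: "nat \<Rightarrow> real"
  assumes sm: "strict_mono t" and x: "t 0 \<le> x" "x < t n"
  shows "\<exists>k<n. t k \<le> x \<and> x < t (Suc k)"
  using x
proof (induction n)
  case 0 then show ?case by simp
next
  case (Suc n)
  show ?case
  proof (cases "x < t n")
    case True
    then obtain k where "k < n" "t k \<le> x \<and> x < t (Suc k)" using Suc by blast
    then show ?thesis by (intro exI[of _ k]) auto
  next
    case False then show ?thesis using Suc.prems by (intro exI[of _ n]) auto
  qed
qed



lemma set_int_bound:
  fixes F :: "real \<Rightarrow> real"
  assumes T: "countable T" and F: "\<And>x. x \<in> {-1<..<1} \<Longrightarrow> x \<notin> T \<Longrightarrow> F x \<le> K" and K0: "K \<ge> 0"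
  shows "(\<integral>x\<in>{-1<..<1}. F x \<partial>lborel) \<le> 2 * K"
proof -
  have "(\<integral>x\<in>{-1<..<1}. F x \<partial>lborel) = (\<integral>x. indicator {-1<..<1::real} x *\<^sub>R F x \<partial>lborel)"
    by (simp add: set_lebesgue_integral_def)
  also have "\<dots> \<le> (\<integral>x. indicator {-1<..<1::real} x *\<^sub>R K \<partial>lborel)"
  proof (rule integral_mono_AE')
    show "integrable lborel (\<lambda>x. indicator {-1<..<1::real} x *\<^sub>R K)"
      by (intro integrable_scaleR_left integrable_real_indicator) auto
    have "AE x in lborel. x \<notin> T" by (intro AE_not_in countable_imp_null_set_lborel T)
    then show "AE x in lborel. indicator {-1<..<1::real} x *\<^sub>R F x \<le> indicator {-1<..<1::real} x *\<^sub>R K"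
      by eventually_elim (auto simp: indicator_def F)
    show "AE x in lborel. 0 \<le> indicator {-1<..<1::real} x *\<^sub>R K" using K0 by (auto simp: indicator_def)
  qed
  also have "\<dots> = 2 * K"
    using set_integral_const[of "{-1<..<1::real}" lborel K] by (simp add: set_lebesgue_integral_def)
  finally show ?thesis .
qed

lemma norms_bound:
  fixes w b :: "real \<Rightarrow> real"
  assumes T: "countable T"
    and pw: "\<And>x. x \<in> {-1<..<1} \<Longrightarrow> x \<notin> T \<Longrightarrow> \<bar>w x\<bar> \<le> P \<and> \<epsilon> * \<bar>deriv w x\<bar> \<le> Q"
    and eps: "\<epsilon> > 0" and b: "\<And>x. x \<in> {-1<..<1} \<Longrightarrow> 0 < b x \<and> b x \<le> b_hi"
    and P0: "P \<ge> 0" and Q0: "Q \<ge> 0" and bh: "b_hi \<ge> 0"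
  shows "energy_norm \<epsilon> b w \<le> sqrt (2 * (Q\<^sup>2 + b_hi * P\<^sup>2))"
    and "L2_norm_I w \<le> sqrt (2 * P\<^sup>2)"
proof -
  have "(\<integral>x\<in>{-1<..<1}. (\<epsilon>\<^sup>2 * (deriv w x)\<^sup>2 + b x * (w x)\<^sup>2) \<partial>lborel) \<le> 2 * (Q\<^sup>2 + b_hi * P\<^sup>2)"
  proof (rule set_int_bound[OF T])
    fix x assume x: "x \<in> {-1<..<1}" "x \<notin> T"
    have a: "\<bar>w x\<bar> \<le> P" "\<epsilon> * \<bar>deriv w x\<bar> \<le> Q" using pw[OF x] by auto
    have "\<epsilon>\<^sup>2 * (deriv w x)\<^sup>2 = (\<epsilon> * \<bar>deriv w x\<bar>)\<^sup>2" by (simp add: power_mult_distrib)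
    also have "\<dots> \<le> Q\<^sup>2" using a eps by (intro power_mono) auto
    finally have 1: "\<epsilon>\<^sup>2 * (deriv w x)\<^sup>2 \<le> Q\<^sup>2" .
    have "(w x)\<^sup>2 \<le> P\<^sup>2" using a by (metis abs_ge_zero power2_abs power_mono)
    then have "b x * (w x)\<^sup>2 \<le> b_hi * P\<^sup>2" using b[OF x(1)]
      by (intro mult_mono) auto
    with 1 show "\<epsilon>\<^sup>2 * (deriv w x)\<^sup>2 + b x * (w x)\<^sup>2 \<le> Q\<^sup>2 + b_hi * P\<^sup>2" by linarith
  qed (use bh in auto)
  then show "energy_norm \<epsilon> b w \<le> sqrt (2 * (Q\<^sup>2 + b_hi * P\<^sup>2))"
    unfolding energy_norm_def by (rule real_sqrt_le_mono)
  have "(\<integral>x\<in>{-1<..<1}. (w x)\<^sup>2 \<partial>lborel) \<le> 2 * P\<^sup>2"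
  proof (rule set_int_bound[OF T])
    fix x assume x: "x \<in> {-1<..<1}" "x \<notin> T"
    have a: "\<bar>w x\<bar> \<le> P" using pw[OF x] by auto
    then show "(w x)\<^sup>2 \<le> P\<^sup>2" by (metis abs_ge_zero power2_abs power_mono)
  qed auto
  then show "L2_norm_I w \<le> sqrt (2 * P\<^sup>2)"
    unfolding L2_norm_I_def by (rule real_sqrt_le_mono)
qed

definition mesh :: "nat \<Rightarrow> real \<Rightarrow> nat \<Rightarrow> real" where
  "mesh N \<tau> k = (if k \<le> N then -1 + real k * \<tau> / real N
     else if k \<le> 2 * N then -1 + \<tau> + (real k - real N) * (2 - 2 * \<tau>) / real N
     else 1 - \<tau> + (real k - 2 * real N) * \<tau> / real N)"

lemma mesh_props:
  assumes N: "N \<ge> 1" and \<tau>: "0 < \<tau>" "\<tau> \<le> 1/2"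
  shows "strict_mono (mesh N \<tau>)" "mesh N \<tau> 0 = -1" "mesh N \<tau> (3 * N) = 1"
    "\<And>k. k < 3 * N \<Longrightarrow> -1 \<le> mesh N \<tau> k \<and> mesh N \<tau> (Suc k) \<le> 1"
    "\<And>k. k < N \<or> 2 * N \<le> k \<Longrightarrow> mesh N \<tau> (Suc k) - mesh N \<tau> k = \<tau> / N"
    "\<And>k. N \<le> k \<Longrightarrow> k < 2 * N \<Longrightarrow> mesh N \<tau> (Suc k) - mesh N \<tau> k = (2 - 2 * \<tau>) / N
        \<and> -1 + \<tau> \<le> mesh N \<tau> k \<and> mesh N \<tau> (Suc k) \<le> 1 - \<tau>"
proof -
  have Np: "real N > 0" using N by simp
  show sp: "mesh N \<tau> (Suc k) - mesh N \<tau> k = \<tau> / N" if "k < N \<or> 2 * N \<le> k" for k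
    using that Np by (cases "k = 2 * N") (auto simp: mesh_def field_simps)
  show mid: "mesh N \<tau> (Suc k) - mesh N \<tau> k = (2 - 2 * \<tau>) / N
        \<and> -1 + \<tau> \<le> mesh N \<tau> k \<and> mesh N \<tau> (Suc k) \<le> 1 - \<tau>" if "N \<le> k" "k < 2 * N" for k
  proof -
    have k1: "real k - real N \<ge> 0" "real (Suc k) - real N \<le> real N" using that by auto
    have t2: "2 - 2 * \<tau> > 0" using \<tau> by simp
    define D1 where "D1 = (real (Suc k) - real N) * (2 - 2 * \<tau>) / real N"
    define D0 where "D0 = (real k - real N) * (2 - 2 * \<tau>) / real N"
    have "mesh N \<tau> (Suc k) = -1 + \<tau> + D1"
      using that by (auto simp: mesh_def D1_def)
    moreover have "mesh N \<tau> k = -1 + \<tau> + D0"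
      using that by (cases "k = N") (auto simp: mesh_def D0_def)
    moreover have "D0 \<ge> 0" using k1 t2 Np by (simp add: D0_def)
    moreover have "D1 \<le> 2 - 2 * \<tau>"
      using k1 t2 Np by (simp add: D1_def divide_le_eq mult_right_mono mult.commute)
    moreover have "D1 - D0 = (2 - 2 * \<tau>) / N" using Np by (simp add: D1_def D0_def field_simps)
    ultimately show ?thesis by linarith
  qed
  show "mesh N \<tau> 0 = -1" by (simp add: mesh_def)
  show "mesh N \<tau> (3 * N) = 1" using N Np by (simp add: mesh_def field_simps)
  show "strict_mono (mesh N \<tau>)"
  proof (rule strict_monoI_Suc)
    fix k
    show "mesh N \<tau> k < mesh N \<tau> (Suc k)"
    proof (cases "k < N \<or> 2 * N \<le> k")
      case True
      have "\<tau> / real N > 0" using \<tau> Np by simp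
      then show ?thesis using sp[OF True] by linarith
    next
      case False
      have "(2 - 2 * \<tau>) / real N > 0" using \<tau> Np by simp
      then show ?thesis using mid[of k] False by auto
    qed
  qed
  then have mono: "mesh N \<tau> i \<le> mesh N \<tau> j" if "i \<le> j" for i j
    using that by (simp add: strict_mono_less_eq)
  show "-1 \<le> mesh N \<tau> k \<and> mesh N \<tau> (Suc k) \<le> 1" if "k < 3 * N" for k
    using mono[of 0 k] mono[of "Suc k" "3 * N"] that \<open>mesh N \<tau> 0 = -1\<close> \<open>mesh N \<tau> (3 * N) = 1\<close> by auto
qed



lemma landau_v:
  fixes v v1 v2 :: "real \<Rightarrow> real"
  assumes d: "\<And>z. z \<in> {lo..hi} \<Longrightarrow> (v has_real_derivative v1 z) (at z) \<and> (v1 has_real_derivative v2 z) (at z)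
      \<and> \<bar>v z\<bar> \<le> Vs \<and> \<epsilon>\<^sup>2 * \<bar>v2 z\<bar> \<le> Z"
    and y: "y \<in> {lo..hi}" and eps: "\<epsilon> > 0" and side: "y + \<epsilon> \<le> hi \<or> lo \<le> y - \<epsilon>"
  shows "\<epsilon> * \<bar>v1 y\<bar> \<le> 2 * Vs + Z"
proof -
  obtain w where w: "w = y + \<epsilon> \<or> w = y - \<epsilon>" "w \<in> {lo..hi}" using side y eps by force
  have aw: "\<bar>w - y\<bar> = \<epsilon>" using w eps by auto
  have "\<bar>v1 y\<bar> \<le> 2 * Vs / \<bar>w - y\<bar> + (Z / \<epsilon>\<^sup>2) * \<bar>w - y\<bar>"
  proof (rule landau[of y w v v1 v2])
    show "y \<noteq> w" using w eps by auto
    fix z assume z: "min y w \<le> z" "z \<le> max y w"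
    then have zi: "z \<in> {lo..hi}" using y w by (auto simp: min_def max_def split: if_splits)
    have "\<epsilon>\<^sup>2 * \<bar>v2 z\<bar> \<le> Z" using d[OF zi] by blast
    then have "\<bar>v2 z\<bar> \<le> Z / \<epsilon>\<^sup>2" using eps by (simp add: field_simps)
    then show "(v has_real_derivative v1 z) (at z) \<and> (v1 has_real_derivative v2 z) (at z) \<and>
       \<bar>v z\<bar> \<le> Vs \<and> \<bar>v2 z\<bar> \<le> Z / \<epsilon>\<^sup>2" using d[OF zi] by blast
  qed
  then have "\<bar>v1 y\<bar> \<le> 2 * Vs / \<epsilon> + (Z / \<epsilon>\<^sup>2) * \<epsilon>" using aw by simp
  then have "\<epsilon> * \<bar>v1 y\<bar> \<le> \<epsilon> * (2 * Vs / \<epsilon> + (Z / \<epsilon>\<^sup>2) * \<epsilon>)" using eps by (simp add: mult_left_mono)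
  also have "\<dots> = 2 * Vs + Z" using eps by (simp add: field_simps power2_eq_square)
  finally show ?thesis .
qed

lemma elem_IIb:
  fixes u u1 u2 g g1 g2 :: "real \<Rightarrow> real"
  assumes ac: "a < c" and sub: "-1 < a" "c < 1"
    and du: "\<And>x. x \<in> {-1<..<1} \<Longrightarrow> (u has_real_derivative u1 x) (at x) \<and> (u1 has_real_derivative u2 x) (at x)"
    and dg: "\<And>x. x \<in> {-1<..<1} \<Longrightarrow> (g has_real_derivative g1 x) (at x) \<and> (g1 has_real_derivative g2 x) (at x) \<and> \<bar>g2 x\<bar> \<le> G"
    and vb: "\<And>z. z \<in> {a..c} \<Longrightarrow> \<bar>u z - g z\<bar> \<le> Vs"
    and vd: "\<And>z. z \<in> {a..c} \<Longrightarrow> \<epsilon> * \<bar>u1 z - g1 z\<bar> \<le> Ks"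
    and x: "x \<in> {a<..<c}" and eps: "\<epsilon> > 0"
  shows "\<bar>u x - (u a + (u c - u a) / (c - a) * (x - a))\<bar> \<le> G * (c - a)\<^sup>2 + 4 * Vs"
    and "\<epsilon> * \<bar>u1 x - (u c - u a) / (c - a)\<bar> \<le> \<epsilon> * (G * (c - a)) + 2 * Ks"
proof -
  define v where "v z = u z - g z" for z
  have inI: "z \<in> {-1<..<1}" if "z \<in> {a..c}" for z using that sub by auto
  have cg: "continuous_on {a..c} g"
    by (rule DERIV_atLeastAtMost_imp_continuous_on) (use dg inI in \<open>meson atLeastAtMost_iff\<close>)
  have ig: "\<forall>x\<in>{a<..<c}. \<bar>g1 x - (g c - g a) / (c - a)\<bar> \<le> G * (c - a)"
     "\<forall>x\<in>{a..c}. \<bar>g x - (g a + (g c - g a) / (c - a) * (x - a))\<bar> \<le> G * (c - a)\<^sup>2"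
    using interp_err[OF ac cg, of g1 g2 G] dg inI by auto
  have dv: "(v has_real_derivative u1 z - g1 z) (at z)" if "z \<in> {a..c}" for z
    unfolding v_def[abs_def] using du[OF inI[OF that]] dg[OF inI[OF that]]
    by (auto intro!: derivative_eq_intros)
  obtain \<xi> where \<xi>: "a < \<xi>" "\<xi> < c" "v c - v a = (c - a) * (u1 \<xi> - g1 \<xi>)"
    using MVT2[OF ac, of v "\<lambda>z. u1 z - g1 z"] dv by force
  have xi: "x \<in> {a..c}" using x by auto
  have split: "(u c - u a) / (c - a) = (g c - g a) / (c - a) + (v c - v a) / (c - a)"
    by (simp add: v_def add_divide_distrib[symmetric])
  have sv: "(v c - v a) / (c - a) = u1 \<xi> - g1 \<xi>" using \<xi> ac by simp
  have "\<bar>(v c - v a) / (c - a) * (x - a)\<bar> \<le> \<bar>v c - v a\<bar>"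
  proof -
    have "\<bar>(v c - v a) / (c - a) * (x - a)\<bar> = \<bar>v c - v a\<bar> * ((x - a) / (c - a))"
      using x ac by (simp add: abs_mult)
    also have "\<dots> \<le> \<bar>v c - v a\<bar> * 1" using x ac by (intro mult_left_mono) auto
    finally show ?thesis by simp
  qed
  note F1 = this
  have F2: "\<bar>v c - v a\<bar> \<le> 2 * Vs" using vb[of a] vb[of c] ac by (simp add: v_def)
  have F3: "\<bar>v x\<bar> \<le> Vs" "\<bar>v a\<bar> \<le> Vs" using vb[OF xi] vb[of a] ac by (auto simp: v_def)
  have F4: "u x - (u a + (u c - u a) / (c - a) * (x - a)) =
      (g x - (g a + (g c - g a) / (c - a) * (x - a))) + (v x - v a - (v c - v a) / (c - a) * (x - a))"
    unfolding split by (simp add: v_def algebra_simps)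
  have H: "\<And>P Q1 Q2 Q3 Q4 :: real. P = Q1 + (Q2 - Q3 - Q4) \<Longrightarrow> \<bar>P\<bar> \<le> \<bar>Q1\<bar> + \<bar>Q2\<bar> + \<bar>Q3\<bar> + \<bar>Q4\<bar>"
    by arith
  note g2 = ig(2)[rule_format, OF xi]
  show "\<bar>u x - (u a + (u c - u a) / (c - a) * (x - a))\<bar> \<le> G * (c - a)\<^sup>2 + 4 * Vs"
    using H[OF F4] g2 F1 F2 F3 by linarith
  have "u1 x - (u c - u a) / (c - a) = (g1 x - (g c - g a) / (c - a)) + (u1 x - g1 x) - (u1 \<xi> - g1 \<xi>)"
    unfolding split sv by simp
  then have "\<epsilon> * \<bar>u1 x - (u c - u a) / (c - a)\<bar> \<le> \<epsilon> * \<bar>g1 x - (g c - g a) / (c - a)\<bar> + \<epsilon> * \<bar>u1 x - g1 x\<bar> + \<epsilon> * \<bar>u1 \<xi> - g1 \<xi>\<bar>"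
    using eps by (simp add: distrib_left[symmetric] mult_left_mono)
  moreover have "\<epsilon> * \<bar>g1 x - (g c - g a) / (c - a)\<bar> \<le> \<epsilon> * (G * (c - a))" using ig(1) x eps by (simp add: mult_left_mono)
  moreover have "\<epsilon> * \<bar>u1 x - g1 x\<bar> \<le> Ks" "\<epsilon> * \<bar>u1 \<xi> - g1 \<xi>\<bar> \<le> Ks" using vd xi \<xi> by auto
  ultimately show "\<epsilon> * \<bar>u1 x - (u c - u a) / (c - a)\<bar> \<le> \<epsilon> * (G * (c - a)) + 2 * Ks" by linarith
qed



theorem proposition4p3:
  fixes b f :: "real \<Rightarrow> real" and b_lo b_hi :: real
  assumes "C2_on b {-1..1}" and "C2_on f {-1..1}"
    and "0 < b_lo" and "\<forall>x\<in>{-1..1}. b_lo \<le> b x \<and> b x \<le> b_hi"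
  shows "\<exists>C c. C > 0 \<and> c > 0 \<and>
    (\<forall>N::nat. \<forall>\<epsilon>::real. \<forall>u. N \<ge> 2 \<longrightarrow> 0 < \<epsilon> \<longrightarrow> \<epsilon> \<le> 1 \<longrightarrow> is_solution \<epsilon> b f u \<longrightarrow>
       (INF \<Phi>\<in>NN 2 (nat \<lfloor>c * real N\<rfloor>) 1 1. ereal (energy_norm \<epsilon> b (\<lambda>x. u x - R \<Phi> x)))
          \<le> ereal (C * ln (real N) / real N) \<and>
       (INF \<Phi>\<in>NN 2 (nat \<lfloor>c * real N\<rfloor>) 1 1. ereal (L2_norm_I (\<lambda>x. u x - R \<Phi> x)))
          \<le> ereal (C * (ln (real N) / real N)\<^sup>2))"
proof -
  let ?S = "{-1..1::real}"
  have blo: "\<And>x. x \<in> ?S \<Longrightarrow> b_lo \<le> b x" and bhi: "\<And>x. x \<in> ?S \<Longrightarrow> b x \<le> b_hi"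
    using assms(4) by auto
  have bpos: "\<And>x. x \<in> ?S \<Longrightarrow> b x > 0" using blo assms(3) by (meson less_le_trans)
  have bh0: "b_hi > 0" using bpos[of 0] bhi[of 0] by simp
  obtain g1 g2 G where G0: "G \<ge> 0" and cg0: "continuous_on ?S (\<lambda>x. f x / b x)"
    and dg0: "\<forall>x\<in>{-1<..<1}. ((\<lambda>x. f x / b x) has_real_derivative g1 x) (at x) \<and>
        (g1 has_real_derivative g2 x) (at x) \<and> \<bar>g2 x\<bar> \<le> G"
    using quot_C2[OF assms(1,2) bpos] by blast
  define g where "g x = f x / b x" for x
  have dg: "\<And>x. x \<in> {-1<..<1} \<Longrightarrow> (g has_real_derivative g1 x) (at x) \<and> (g1 has_real_derivative g2 x) (at x) \<and> \<bar>g2 x\<bar> \<le> G"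
    using dg0 unfolding g_def[abs_def] by blast
  have cg: "continuous_on ?S g" using cg0 unfolding g_def[abs_def] .
  define \<beta> where "\<beta> = sqrt b_lo"
  have \<beta>0: "\<beta> > 0" using assms(3) by (simp add: \<beta>_def)
  define A where "A = G / b_lo"
  define Bg where "Bg = \<bar>g (-1)\<bar> + \<bar>g 1\<bar>"
  define V where "V = A + 2 * Bg"
  define M0 where "M0 = b_hi * V"
  define K3 where "K3 = 2 * V + b_hi * V + G"
  define X1 where "X1 = 16 * M0 / \<beta>\<^sup>2"
  define X2 where "X2 = 4 * M0 / \<beta>"
  define K where "K = X1 + X2 + 16 * M0 + 16 * (G + V) + 4 * G + 4 * K3"
  have A0: "A \<ge> 0" using G0 assms(3) by (simp add: A_def)
  have Bg0: "Bg \<ge> 0" by (simp add: Bg_def)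
  have V0: "V \<ge> 0" using A0 Bg0 by (simp add: V_def)
  have M00: "M0 \<ge> 0" using V0 bh0 by (simp add: M0_def)
  have K30: "K3 \<ge> 0" using V0 bh0 G0 by (simp add: K3_def)
  have t1: "X1 \<ge> 0" "X2 \<ge> 0" using M00 \<beta>0 by (simp_all add: X1_def X2_def)
  have Kg1: "X1 \<le> K" using t1 M00 G0 V0 K30 unfolding K_def by simp
  have Kg2: "X2 \<le> K" using t1 M00 G0 V0 K30 unfolding K_def by simp
  have Kg3: "16 * M0 \<le> K" using t1 M00 G0 V0 K30 unfolding K_def by simp
  have Kg4: "4 * M0 \<le> K" using t1 M00 G0 V0 K30 unfolding K_def by simp
  have Kg5: "16 * (G + V) \<le> K" using t1 M00 G0 V0 K30 unfolding K_def by simp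
  have Kg6: "4 * G + 4 * K3 \<le> K" using t1 M00 G0 V0 K30 unfolding K_def by simp
  have Kg7: "K \<ge> 0" using t1 M00 G0 V0 K30 unfolding K_def by simp
  note Kge = Kg1 Kg2 Kg3 Kg4 Kg5 Kg6 Kg7
  define C where "C = sqrt (2 * (1 + b_hi)) * K + sqrt 2 * K + 1"
  have C0: "C > 0" using Kge(7) bh0 unfolding C_def by (simp add: add_nonneg_pos)
  show ?thesis
  proof (rule exI[of _ C], rule exI[of _ 3], intro conjI)
    show "C > 0" by (rule C0)
    show "(3::real) > 0" by simp
    show "\<forall>N::nat. \<forall>\<epsilon>::real. \<forall>u. N \<ge> 2 \<longrightarrow> 0 < \<epsilon> \<longrightarrow> \<epsilon> \<le> 1 \<longrightarrow> is_solution \<epsilon> b f u \<longrightarrow>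
       (INF \<Phi>\<in>NN 2 (nat \<lfloor>3 * real N\<rfloor>) 1 1. ereal (energy_norm \<epsilon> b (\<lambda>x. u x - R \<Phi> x)))
          \<le> ereal (C * ln (real N) / real N) \<and>
       (INF \<Phi>\<in>NN 2 (nat \<lfloor>3 * real N\<rfloor>) 1 1. ereal (L2_norm_I (\<lambda>x. u x - R \<Phi> x)))
          \<le> ereal (C * (ln (real N) / real N)\<^sup>2)"
    proof (intro allI impI)
      fix N :: nat and \<epsilon> :: real and u :: "real \<Rightarrow> real"
      assume N2: "2 \<le> N" and e0: "0 < \<epsilon>" and e1: "\<epsilon> \<le> 1" and sol: "is_solution \<epsilon> b f u"
      have W: "nat \<lfloor>3 * real N\<rfloor> = 3 * N"
      proof -
        have "3 * real N = real (3 * N)" by simp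
        then show ?thesis by (metis floor_of_nat nat_int)
      qed
      have Nr: "real N \<ge> 2" using N2 by simp
      define lam where "lam = ln (real N) / real N"
      have lnN: "ln (real N) \<ge> 2/3" using ln2_ge_two_thirds Nr by (smt (verit) ln_le_cancel_iff)
      have lam0: "lam > 0" using lnN Nr by (simp add: lam_def)
      have lam1: "lam \<le> 1" using ln_le_minus_one[of "real N"] Nr by (simp add: lam_def)
      have invN: "1 / real N \<le> 2 * lam" using lnN Nr by (simp add: lam_def divide_right_mono)
      have invN2: "1 / (real N)\<^sup>2 \<le> 4 * lam\<^sup>2"
      proof -
        have "1 / (real N)\<^sup>2 = (1 / real N)\<^sup>2" by (simp add: power_divide)
        also have "\<dots> \<le> (2 * lam)\<^sup>2" using invN Nr by (intro power_mono) auto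
        finally show ?thesis by (simp add: power_mult_distrib)
      qed
      obtain u1 u2 where cu: "continuous_on ?S u" and u_bd: "u (-1) = 0" "u 1 = 0"
        and du0: "\<forall>x\<in>{-1<..<1}. (u has_real_derivative u1 x) (at x) \<and>
        (u1 has_real_derivative u2 x) (at x) \<and> - \<epsilon>\<^sup>2 * u2 x + b x * u x = f x"
        using sol unfolding is_solution_def by blast
      have du: "\<And>x. x \<in> {-1<..<1} \<Longrightarrow> (u has_real_derivative u1 x) (at x) \<and> (u1 has_real_derivative u2 x) (at x)"
        using du0 by blast
      define v where "v x = u x - g x" for x
      have ode: "\<epsilon>\<^sup>2 * u2 x = b x * v x" if "x \<in> {-1<..<1}" for x
      proof -
        have "b x * g x = f x" using bpos[of x] that by (simp add: g_def)
        then show ?thesis using du0 that by (simp add: v_def algebra_simps)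
      qed
      have cv: "continuous_on ?S v" unfolding v_def[abs_def] by (intro continuous_intros cu cg)
      have dd: "\<And>x. x \<in> {-1<..<1} \<Longrightarrow> (v has_real_derivative u1 x - g1 x) (at x) \<and>
          ((\<lambda>x. u1 x - g1 x) has_real_derivative u2 x - g2 x) (at x) \<and>
          - \<epsilon>\<^sup>2 * (u2 x - g2 x) + b x * v x = \<epsilon>\<^sup>2 * g2 x \<and> \<bar>g2 x\<bar> \<le> G"
      proof -
        fix x :: real assume x: "x \<in> {-1<..<1}"
        have "(v has_real_derivative u1 x - g1 x) (at x)"
          unfolding v_def[abs_def] using du[OF x] dg[OF x] by (auto intro!: derivative_eq_intros)
        moreover have "((\<lambda>x. u1 x - g1 x) has_real_derivative u2 x - g2 x) (at x)"
          using du[OF x] dg[OF x] by (auto intro!: derivative_eq_intros)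
        moreover have "- \<epsilon>\<^sup>2 * (u2 x - g2 x) + b x * v x = \<epsilon>\<^sup>2 * g2 x" using ode[OF x] by (simp add: algebra_simps)
        ultimately show "(v has_real_derivative u1 x - g1 x) (at x) \<and>
          ((\<lambda>x. u1 x - g1 x) has_real_derivative u2 x - g2 x) (at x) \<and>
          - \<epsilon>\<^sup>2 * (u2 x - g2 x) + b x * v x = \<epsilon>\<^sup>2 * g2 x \<and> \<bar>g2 x\<bar> \<le> G" using dg[OF x] by blast
      qed
      have bdv: "\<bar>v (-1)\<bar> \<le> Bg" "\<bar>v 1\<bar> \<le> Bg" using u_bd by (auto simp: v_def Bg_def)
      have vb0: "\<forall>x\<in>?S. \<bar>v x\<bar> \<le> (G / b_lo) * \<epsilon>\<^sup>2 +
          Bg * (exp (- (sqrt b_lo * (1 + x)) / \<epsilon>) + exp (- (sqrt b_lo * (1 - x)) / \<epsilon>))"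
        by (rule barrier_bound[OF assms(3) blo e0 cv dd bdv G0])
      have vb: "\<bar>v x\<bar> \<le> A * \<epsilon>\<^sup>2 + Bg * (exp (- (\<beta> * (1 + x)) / \<epsilon>) + exp (- (\<beta> * (1 - x)) / \<epsilon>))"
        if "x \<in> ?S" for x
        using vb0 that unfolding A_def \<beta>_def by blast
      have vV: "\<bar>v x\<bar> \<le> V" if "x \<in> ?S" for x
      proof -
        have ex: "exp (- (\<beta> * (1 + x)) / \<epsilon>) \<le> 1" "exp (- (\<beta> * (1 - x)) / \<epsilon>) \<le> 1"
          using that \<beta>0 e0 by (auto simp: divide_nonneg_pos)
        have "exp (- (\<beta> * (1 + x)) / \<epsilon>) + exp (- (\<beta> * (1 - x)) / \<epsilon>) \<le> 2" using ex by linarith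
        then have "Bg * (exp (- (\<beta> * (1 + x)) / \<epsilon>) + exp (- (\<beta> * (1 - x)) / \<epsilon>)) \<le> Bg * 2"
          by (rule mult_left_mono[OF _ Bg0])
        moreover have "A * \<epsilon>\<^sup>2 \<le> A" using A0 e0 e1 by (simp add: mult_left_le power_le_one)
        ultimately show ?thesis using vb[OF that] unfolding V_def by linarith
      qed
      have u2g: "\<bar>u2 x\<bar> \<le> M0 / \<epsilon>\<^sup>2" if "x \<in> {-1<..<1}" for x
      proof -
        have xS: "x \<in> ?S" using that by auto
        have "\<epsilon>\<^sup>2 * \<bar>u2 x\<bar> = b x * \<bar>v x\<bar>" using ode[OF that] bpos[OF xS]
          by (metis abs_mult abs_of_pos zero_less_power e0)
        also have "\<dots> \<le> b_hi * V" using bhi[OF xS] vV[OF xS] bpos[OF xS] by (intro mult_mono) auto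
        finally show ?thesis using e0 by (simp add: M0_def field_simps)
      qed
      define \<tau> where "\<tau> = min (1/2) (2 * \<epsilon> * ln (real N) / \<beta>)"
      have tau0: "\<tau> > 0" using e0 lnN \<beta>0 by (simp add: \<tau>_def)
      have tau1: "\<tau> \<le> 1/2" "\<tau> \<le> 2 * \<epsilon> * ln (real N) / \<beta>" by (simp_all add: \<tau>_def)
      define t where "t = mesh N \<tau>"
      have N1: "N \<ge> 1" using N2 by simp
      note mp = mesh_props[OF N1 tau0 tau1(1), folded t_def]
      define p where "p k = u (t k)" for k
      define \<Phi> where "\<Phi> = net t p (3 * N)"
      have PhiNN: "\<Phi> \<in> NN 2 (nat \<lfloor>3 * real N\<rfloor>) 1 1" unfolding W \<Phi>_def using N1 by (intro net_in_NN) auto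
      have elem: "\<bar>u x - (u (t k) + (u (t (Suc k)) - u (t k)) / (t (Suc k) - t k) * (x - t k))\<bar> \<le> K * lam\<^sup>2 \<and>
          \<epsilon> * \<bar>u1 x - (u (t (Suc k)) - u (t k)) / (t (Suc k) - t k)\<bar> \<le> K * lam"
        if k: "k < 3 * N" and x: "t k < x" "x < t (Suc k)" for k x
      proof -
        define a where "a = t k"
        define c where "c = t (Suc k)"
        have ac: "a < c" using mp(1) by (simp add: a_def c_def strict_mono_def)
        have aS: "-1 \<le> a" "c \<le> 1" using mp(4)[OF k] by (auto simp: a_def c_def)
        have xa: "x \<in> {a<..<c}" using x by (simp add: a_def c_def)
        have cua: "continuous_on {a..c} u" by (rule continuous_on_subset[OF cu]) (use aS in auto)
        have sub: "\<And>z. z \<in> {a<..<c} \<Longrightarrow> z \<in> {-1<..<1}" using aS by auto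
        have Npos: "real N > 0" using Nr by simp
        have ca0: "c - a > 0" using ac by simp
        have "\<bar>u x - (u a + (u c - u a) / (c - a) * (x - a))\<bar> \<le> K * lam\<^sup>2 \<and>
          \<epsilon> * \<bar>u1 x - (u c - u a) / (c - a)\<bar> \<le> K * lam"
        proof (cases "(k < N \<or> 2 * N \<le> k) \<or> \<not> (2 * \<epsilon> * ln (real N) / \<beta> \<le> 1/2)")
          case True
          have hq: "(c - a) / \<epsilon> \<le> 4 * lam / \<beta>"
          proof (cases "k < N \<or> 2 * N \<le> k")
            case True
            have "c - a = \<tau> / N" using mp(5)[OF True] by (simp add: a_def c_def)
            also have "\<dots> \<le> (2 * \<epsilon> * ln (real N) / \<beta>) / N" using Npos by (intro divide_right_mono[OF tau1(2)]) simp
            finally have cle: "c - a \<le> (2 * \<epsilon> * ln (real N) / \<beta>) / N" .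
            have "(c - a) / \<epsilon> \<le> (2 * \<epsilon> * ln (real N) / \<beta>) / N / \<epsilon>"
              using e0 by (intro divide_right_mono[OF cle]) simp
            also have "\<dots> = 2 * lam / \<beta>" using e0 by (simp add: lam_def field_simps)
            also have "\<dots> \<le> 4 * lam / \<beta>" using lam0 \<beta>0 by (simp add: divide_right_mono)
            finally show ?thesis .
          next
            case False
            then have int: "N \<le> k" "k < 2 * N" by auto
            have big: "1/2 < 2 * \<epsilon> * ln (real N) / \<beta>" using True False by auto
            then have tau: "\<tau> = 1/2" by (simp add: \<tau>_def)
            have "c - a = (2 - 2 * \<tau>) / N" using mp(6)[OF int] by (simp add: a_def c_def)
            then have ca: "c - a = 1 / N" using tau by simp
            have b4: "\<beta> < 4 * \<epsilon> * ln (real N)" using big \<beta>0 by (simp add: field_simps)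
            have "(c - a) / \<epsilon> = 1 / (N * \<epsilon>)" using ca by simp
            also have "\<dots> \<le> 4 * lam / \<beta>" using b4 e0 \<beta>0 Npos
              by (simp add: lam_def field_simps)
            finally show ?thesis .
          qed
          have hq0: "(c - a) / \<epsilon> \<ge> 0" using ca0 e0 by simp
          have dd: "\<And>z. z \<in> {a<..<c} \<Longrightarrow> (u has_real_derivative u1 z) (at z) \<and> (u1 has_real_derivative u2 z) (at z) \<and> \<bar>u2 z\<bar> \<le> M0 / \<epsilon>\<^sup>2"
            using du u2g sub by blast
          note ie = interp_err[OF ac cua dd]
          have w1: "\<bar>u x - (u a + (u c - u a) / (c - a) * (x - a))\<bar> \<le> M0 / \<epsilon>\<^sup>2 * (c - a)\<^sup>2"
            using ie(2) xa by auto
          have w2: "\<bar>u1 x - (u c - u a) / (c - a)\<bar> \<le> M0 / \<epsilon>\<^sup>2 * (c - a)" using ie(1) xa by auto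
          have "M0 / \<epsilon>\<^sup>2 * (c - a)\<^sup>2 = M0 * ((c - a) / \<epsilon>)\<^sup>2" by (simp add: power_divide)
          also have "\<dots> \<le> M0 * (4 * lam / \<beta>)\<^sup>2" using hq hq0 M00 by (intro mult_left_mono power_mono) auto
          also have "\<dots> = X1 * lam\<^sup>2" by (simp add: X1_def power_divide power_mult_distrib)
          also have "\<dots> \<le> K * lam\<^sup>2" using Kge(1) by (intro mult_right_mono) auto
          finally have r1: "\<bar>u x - (u a + (u c - u a) / (c - a) * (x - a))\<bar> \<le> K * lam\<^sup>2" using w1 by linarith
          have "\<epsilon> * \<bar>u1 x - (u c - u a) / (c - a)\<bar> \<le> \<epsilon> * (M0 / \<epsilon>\<^sup>2 * (c - a))" using w2 e0 by (intro mult_left_mono) auto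
          also have "\<dots> = M0 * ((c - a) / \<epsilon>)" using e0 by (simp add: power2_eq_square field_simps)
          also have "\<dots> \<le> M0 * (4 * lam / \<beta>)" using hq M00 by (intro mult_left_mono) auto
          also have "\<dots> = X2 * lam" by (simp add: X2_def)
          also have "\<dots> \<le> K * lam" using Kge(2) lam0 by (intro mult_right_mono) auto
          finally show ?thesis using r1 by blast
        next
          case False
          then have int: "N \<le> k" "k < 2 * N" and small: "2 * \<epsilon> * ln (real N) / \<beta> \<le> 1/2" by auto
          have tau: "\<tau> = 2 * \<epsilon> * ln (real N) / \<beta>" using small by (simp add: \<tau>_def)
          have ia: "-1 + \<tau> \<le> a" "c \<le> 1 - \<tau>" and ca: "c - a = (2 - 2 * \<tau>) / N"
            using mp(6)[OF int] by (auto simp: a_def c_def)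
          have ca2: "c - a \<le> 2 / N" using ca tau0 Npos by (simp add: divide_right_mono)
          have expb: "exp (- (\<beta> * \<tau>) / \<epsilon>) = 1 / (real N)\<^sup>2"
          proof -
            have "- (\<beta> * \<tau>) / \<epsilon> = - (ln (real N) + ln (real N))" using tau e0 \<beta>0 by (simp add: field_simps)
            moreover have "exp (ln (real N) + ln (real N)) = real N * real N" using Npos by (subst exp_add) simp
            ultimately show ?thesis by (simp add: exp_minus power2_eq_square divide_inverse)
          qed
          have vint: "\<bar>v z\<bar> \<le> A * \<epsilon>\<^sup>2 + 2 * Bg / (real N)\<^sup>2" if z: "-1 + \<tau> \<le> z" "z \<le> 1 - \<tau>" for z
          proof -
            have zS: "z \<in> ?S" using z tau0 tau1 by auto
            have m1: "exp (- (\<beta> * (1 + z)) / \<epsilon>) \<le> exp (- (\<beta> * \<tau>) / \<epsilon>)"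
              using z \<beta>0 e0 by (simp add: divide_right_mono mult_left_mono)
            have m2: "exp (- (\<beta> * (1 - z)) / \<epsilon>) \<le> exp (- (\<beta> * \<tau>) / \<epsilon>)"
              using z \<beta>0 e0 by (simp add: divide_right_mono mult_left_mono)
            have "exp (- (\<beta> * (1 + z)) / \<epsilon>) + exp (- (\<beta> * (1 - z)) / \<epsilon>) \<le> 2 / (real N)\<^sup>2"
            proof -
              have "exp (- (\<beta> * (1 + z)) / \<epsilon>) + exp (- (\<beta> * (1 - z)) / \<epsilon>)
                  \<le> exp (- (\<beta> * \<tau>) / \<epsilon>) + exp (- (\<beta> * \<tau>) / \<epsilon>)" using m1 m2 by linarith
              also have "\<dots> = 2 / (real N)\<^sup>2" unfolding expb by simp
              finally show ?thesis .
            qed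
            then have "Bg * (exp (- (\<beta> * (1 + z)) / \<epsilon>) + exp (- (\<beta> * (1 - z)) / \<epsilon>)) \<le> Bg * (2 / (real N)\<^sup>2)"
              by (rule mult_left_mono[OF _ Bg0])
            moreover have "Bg * (2 / (real N)\<^sup>2) = 2 * Bg / (real N)\<^sup>2" by simp
            ultimately show ?thesis using vb[OF zS] by linarith
          qed
          have ab: "-1 < a" "c < 1" using ia tau0 by auto
          show ?thesis
          proof (cases "1 / real N \<le> \<epsilon>")
            case True
            have eN: "1 / (real N)\<^sup>2 \<le> \<epsilon>\<^sup>2" using True Npos by (metis power_mono divide_nonneg_pos zero_le_one power_divide one_power2 less_imp_le)
            have dd: "\<And>z. z \<in> {a<..<c} \<Longrightarrow> (u has_real_derivative u1 z) (at z) \<and> (u1 has_real_derivative u2 z) (at z) \<and> \<bar>u2 z\<bar> \<le> M0"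
            proof -
              fix z assume z: "z \<in> {a<..<c}"
              have zI: "z \<in> {-1<..<1}" and zS: "z \<in> ?S" using sub[OF z] by auto
              have "\<epsilon>\<^sup>2 * \<bar>u2 z\<bar> = b z * \<bar>v z\<bar>" using ode[OF zI] bpos[OF zS]
                by (metis abs_mult abs_of_pos zero_less_power e0)
              also have "\<dots> \<le> b_hi * (A * \<epsilon>\<^sup>2 + 2 * Bg / (real N)\<^sup>2)"
                using bhi[OF zS] vint[of z] z ia bpos[OF zS] by (intro mult_mono) auto
              also have "\<dots> \<le> b_hi * (A * \<epsilon>\<^sup>2 + 2 * Bg * \<epsilon>\<^sup>2)"
              proof -
                have "2 * Bg / (real N)\<^sup>2 = 2 * Bg * (1 / (real N)\<^sup>2)" by simp
                also have "\<dots> \<le> 2 * Bg * \<epsilon>\<^sup>2" using eN Bg0 by (intro mult_left_mono) auto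
                finally show ?thesis using bh0 by (intro mult_left_mono) auto
              qed
              also have "\<dots> = \<epsilon>\<^sup>2 * M0" by (simp add: M0_def V_def algebra_simps)
              finally have "\<epsilon>\<^sup>2 * \<bar>u2 z\<bar> \<le> \<epsilon>\<^sup>2 * M0" .
              then have "\<bar>u2 z\<bar> \<le> M0" using e0 by simp
              then show "(u has_real_derivative u1 z) (at z) \<and> (u1 has_real_derivative u2 z) (at z) \<and> \<bar>u2 z\<bar> \<le> M0"
                using du[OF zI] by blast
            qed
            note ie = interp_err[OF ac cua dd]
            have w1: "\<bar>u x - (u a + (u c - u a) / (c - a) * (x - a))\<bar> \<le> M0 * (c - a)\<^sup>2"
              using ie(2) xa by auto
            have w2: "\<bar>u1 x - (u c - u a) / (c - a)\<bar> \<le> M0 * (c - a)" using ie(1) xa by auto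
            have "M0 * (c - a)\<^sup>2 \<le> M0 * (2 / real N)\<^sup>2" using ca2 ca0 M00 by (intro mult_left_mono power_mono) auto
            also have "\<dots> = 4 * M0 * (1 / (real N)\<^sup>2)" by (simp add: power_divide)
            also have "\<dots> \<le> 4 * M0 * (4 * lam\<^sup>2)" using invN2 M00 by (intro mult_left_mono) auto
            also have "\<dots> = (16 * M0) * lam\<^sup>2" by simp
            also have "\<dots> \<le> K * lam\<^sup>2" using Kge(3) by (intro mult_right_mono) auto
            finally have r1: "\<bar>u x - (u a + (u c - u a) / (c - a) * (x - a))\<bar> \<le> K * lam\<^sup>2" using w1 by linarith
            have "\<epsilon> * \<bar>u1 x - (u c - u a) / (c - a)\<bar> \<le> 1 * (M0 * (c - a))"
              using w2 e0 e1 M00 ca0 by (intro mult_mono) auto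
            also have "\<dots> \<le> M0 * (2 / real N)" using mult_left_mono[OF ca2 M00] by simp
            also have "\<dots> = 2 * M0 * (1 / real N)" by simp
            also have "\<dots> \<le> 2 * M0 * (2 * lam)" using invN M00 by (intro mult_left_mono) auto
            also have "\<dots> = (4 * M0) * lam" by simp
            also have "\<dots> \<le> K * lam" using Kge(4) lam0 by (intro mult_right_mono) auto
            finally show ?thesis using r1 by blast
          next
            case False
            then have eN: "\<epsilon> < 1 / real N" by simp
            have eN2: "\<epsilon>\<^sup>2 \<le> 1 / (real N)\<^sup>2" using eN e0 by (metis power_mono power_divide one_power2 less_imp_le)
            have eh: "\<epsilon> \<le> 1/2" using eN Nr by (smt (verit) frac_le one_le_numeral)
            have vs: "\<bar>v z\<bar> \<le> V / (real N)\<^sup>2" if "-1 + \<tau> \<le> z" "z \<le> 1 - \<tau>" for z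
            proof -
              have "A * \<epsilon>\<^sup>2 \<le> A * (1 / (real N)\<^sup>2)" using eN2 A0 by (intro mult_left_mono)
              then have "A * \<epsilon>\<^sup>2 + 2 * Bg / (real N)\<^sup>2 \<le> V / (real N)\<^sup>2" by (simp add: V_def add_divide_distrib)
              then show ?thesis using vint[OF that] by linarith
            qed
            have dL: "(v has_real_derivative u1 z - g1 z) (at z) \<and> ((\<lambda>z. u1 z - g1 z) has_real_derivative u2 z - g2 z) (at z)
                \<and> \<bar>v z\<bar> \<le> V / (real N)\<^sup>2 \<and> \<epsilon>\<^sup>2 * \<bar>u2 z - g2 z\<bar> \<le> (b_hi * V + G) / (real N)\<^sup>2"
              if z: "z \<in> {-1 + \<tau>..1 - \<tau>}" for z
            proof -
              have zI: "z \<in> {-1<..<1}" and zS: "z \<in> ?S" using z tau0 by auto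
              have "\<epsilon>\<^sup>2 * \<bar>u2 z - g2 z\<bar> \<le> \<epsilon>\<^sup>2 * \<bar>u2 z\<bar> + \<epsilon>\<^sup>2 * \<bar>g2 z\<bar>"
                by (metis abs_triangle_ineq4 distrib_left mult_left_mono zero_le_power2)
              also have "\<epsilon>\<^sup>2 * \<bar>u2 z\<bar> = b z * \<bar>v z\<bar>" using ode[OF zI] bpos[OF zS]
                by (metis abs_mult abs_of_pos zero_less_power e0)
              also have "b z * \<bar>v z\<bar> \<le> b_hi * (V / (real N)\<^sup>2)"
                using bhi[OF zS] vs[of z] z bpos[OF zS] by (intro mult_mono) auto
              also have "\<epsilon>\<^sup>2 * \<bar>g2 z\<bar> \<le> (1 / (real N)\<^sup>2) * G"
                using eN2 dg[OF zI] by (intro mult_mono) auto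
              finally have "\<epsilon>\<^sup>2 * \<bar>u2 z - g2 z\<bar> \<le> (b_hi * V + G) / (real N)\<^sup>2"
                by (simp add: add_divide_distrib)
              then show ?thesis using dd[OF zI] vs[of z] z by auto
            qed
            have vd: "\<epsilon> * \<bar>u1 y - g1 y\<bar> \<le> K3 / (real N)\<^sup>2" if y: "y \<in> {a..c}" for y
            proof -
              have yI: "y \<in> {-1 + \<tau>..1 - \<tau>}" using y ia by auto
              have side: "y + \<epsilon> \<le> 1 - \<tau> \<or> -1 + \<tau> \<le> y - \<epsilon>"
                using yI tau1(1) eh by (cases "y \<le> 0") auto
              have "\<epsilon> * \<bar>u1 y - g1 y\<bar> \<le> 2 * (V / (real N)\<^sup>2) + (b_hi * V + G) / (real N)\<^sup>2"
                by (rule landau_v[OF dL yI e0 side])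
              also have "\<dots> = K3 / (real N)\<^sup>2" by (simp add: K3_def add_divide_distrib)
              finally show ?thesis .
            qed
            have vbb: "\<bar>u z - g z\<bar> \<le> V / (real N)\<^sup>2" if "z \<in> {a..c}" for z
              using vs[of z] that ia by (auto simp: v_def)
            note eIIb = elem_IIb[OF ac ab du dg vbb vd xa e0]
            have i1: "1 / (real N)\<^sup>2 \<le> 1 / real N" using Nr by (simp add: power2_eq_square field_simps)
            have "G * (c - a)\<^sup>2 \<le> G * (2 / real N)\<^sup>2" using ca2 ca0 G0 by (intro mult_left_mono power_mono) auto
            then have "G * (c - a)\<^sup>2 + 4 * (V / (real N)\<^sup>2) \<le> (4 * G + 4 * V) * (1 / (real N)\<^sup>2)"
              by (simp add: power_divide algebra_simps)
            also have "\<dots> \<le> (4 * G + 4 * V) * (4 * lam\<^sup>2)" using invN2 G0 V0 by (intro mult_left_mono) auto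
            also have "\<dots> = (16 * (G + V)) * lam\<^sup>2" by (simp add: algebra_simps)
            also have "\<dots> \<le> K * lam\<^sup>2" using Kge(5) by (intro mult_right_mono) auto
            finally have r1: "\<bar>u x - (u a + (u c - u a) / (c - a) * (x - a))\<bar> \<le> K * lam\<^sup>2" using eIIb(1) by linarith
            have "\<epsilon> * (G * (c - a)) \<le> 1 * (G * (2 / real N))" using e0 e1 G0 ca2 ca0 by (intro mult_mono) auto
            moreover have "2 * (K3 / (real N)\<^sup>2) \<le> 2 * (K3 * (1 / real N))"
              using i1 K30 by (simp add: divide_inverse mult_left_mono)
            ultimately have "\<epsilon> * (G * (c - a)) + 2 * (K3 / (real N)\<^sup>2) \<le> (2 * G + 2 * K3) * (1 / real N)"
              by (simp add: algebra_simps)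
            also have "\<dots> \<le> (2 * G + 2 * K3) * (2 * lam)" using invN G0 K30 by (intro mult_left_mono) auto
            also have "\<dots> = (4 * G + 4 * K3) * lam" by (simp add: algebra_simps)
            also have "\<dots> \<le> K * lam" using Kge(6) lam0 by (intro mult_right_mono) auto
            finally show ?thesis using r1 eIIb(2) by linarith
          qed
        qed
        then show ?thesis unfolding a_def c_def .
      qed
      have pw: "\<bar>u x - R \<Phi> x\<bar> \<le> K * lam\<^sup>2 \<and> \<epsilon> * \<bar>deriv (\<lambda>x. u x - R \<Phi> x) x\<bar> \<le> K * lam"
        if x: "x \<in> {-1<..<1}" "x \<notin> range t" for x
      proof -
        obtain k where k: "k < 3 * N" "t k \<le> x" "x < t (Suc k)"
          using find_elem[OF mp(1), of x "3 * N"] mp(2,3) x(1) by auto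
        have tk: "t k < x" using k(2) x(2) by (metis le_less rangeI)
        have R: "R \<Phi> x = p k + slope t p k * (x - t k)"
          unfolding \<Phi>_def by (rule R_net_elem[OF mp(1) k(1) k(2)]) (use k in simp)
        have dR: "(R \<Phi> has_real_derivative slope t p k) (at x)"
          unfolding \<Phi>_def by (rule R_net_deriv[OF mp(1) k(1) tk k(3)])
        have "((\<lambda>x. u x - R \<Phi> x) has_real_derivative u1 x - slope t p k) (at x)"
          using du[OF x(1)] dR by (auto intro!: derivative_eq_intros)
        then have dv: "deriv (\<lambda>x. u x - R \<Phi> x) x = u1 x - slope t p k" by (rule DERIV_imp_deriv)
        show ?thesis using elem[OF k(1) tk k(3)] unfolding R dv slope_def p_def by simp
      qed
      have cnt: "countable (range t)" by simp
      have bI: "\<And>x. x \<in> {-1<..<1} \<Longrightarrow> 0 < b x \<and> b x \<le> b_hi" using bpos bhi by auto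
      have P0: "K * lam\<^sup>2 \<ge> 0" and Q0: "K * lam \<ge> 0" using Kge(7) lam0 by simp_all
      note nb = norms_bound[where b = b and b_hi = b_hi, OF cnt pw e0 bI P0 Q0 less_imp_le[OF bh0]]
      have E1: "energy_norm \<epsilon> b (\<lambda>x. u x - R \<Phi> x) \<le> C * ln (real N) / real N"
      proof -
        have "(K * lam)\<^sup>2 + b_hi * (K * lam\<^sup>2)\<^sup>2 \<le> (1 + b_hi) * (K * lam)\<^sup>2"
        proof -
          have "(K * lam\<^sup>2)\<^sup>2 \<le> (K * lam)\<^sup>2"
            using lam0 lam1 Kge(7) by (intro power_mono mult_left_mono) (auto simp: power2_eq_square mult_le_cancel_left1)
          then show ?thesis using bh0 by (simp add: algebra_simps mult_left_mono)
        qed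
        then have s1: "sqrt (2 * ((K * lam)\<^sup>2 + b_hi * (K * lam\<^sup>2)\<^sup>2)) \<le> sqrt (2 * ((1 + b_hi) * (K * lam)\<^sup>2))"
          by (intro real_sqrt_le_mono) simp
        have sq: "sqrt ((K * lam)\<^sup>2) = K * lam" using Kge(7) lam0 by simp
        have e1: "sqrt (2 * ((1 + b_hi) * (K * lam)\<^sup>2)) = sqrt (2 * (1 + b_hi)) * sqrt ((K * lam)\<^sup>2)"
          by (subst real_sqrt_mult[symmetric]) (metis mult.assoc)
        have e2: "sqrt (2 * ((1 + b_hi) * (K * lam)\<^sup>2)) = sqrt (2 * (1 + b_hi)) * K * lam"
          using e1 unfolding sq by (simp only: mult.assoc)
        have "sqrt (2 * (1 + b_hi)) * K \<le> C" unfolding C_def using Kge(7) by simp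
        then have "sqrt (2 * (1 + b_hi)) * K * lam \<le> C * lam" using lam0 by (intro mult_right_mono) auto
        then have "sqrt (2 * ((K * lam)\<^sup>2 + b_hi * (K * lam\<^sup>2)\<^sup>2)) \<le> C * lam" using s1 e2 by linarith
        then show ?thesis using nb(1) by (simp add: lam_def)
      qed
      have E2: "L2_norm_I (\<lambda>x. u x - R \<Phi> x) \<le> C * (ln (real N) / real N)\<^sup>2"
      proof -
        have "sqrt (2 * (K * lam\<^sup>2)\<^sup>2) = sqrt 2 * sqrt ((K * lam\<^sup>2)\<^sup>2)"
          by (rule real_sqrt_mult)
        also have "sqrt ((K * lam\<^sup>2)\<^sup>2) = K * lam\<^sup>2" using Kge(7) by simp
        finally have e3: "sqrt (2 * (K * lam\<^sup>2)\<^sup>2) = sqrt 2 * K * lam\<^sup>2" by (simp only: mult.assoc)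
        have "sqrt 2 * K \<le> C" unfolding C_def using Kge(7) bh0 by simp
        then have "sqrt 2 * K * lam\<^sup>2 \<le> C * lam\<^sup>2" by (intro mult_right_mono) auto
        then have "sqrt (2 * (K * lam\<^sup>2)\<^sup>2) \<le> C * lam\<^sup>2" using e3 by linarith
        then show ?thesis using nb(2) by (simp add: lam_def)
      qed
      show "(INF \<Phi>\<in>NN 2 (nat \<lfloor>3 * real N\<rfloor>) 1 1. ereal (energy_norm \<epsilon> b (\<lambda>x. u x - R \<Phi> x)))
          \<le> ereal (C * ln (real N) / real N) \<and>
       (INF \<Phi>\<in>NN 2 (nat \<lfloor>3 * real N\<rfloor>) 1 1. ereal (L2_norm_I (\<lambda>x. u x - R \<Phi> x)))
          \<le> ereal (C * (ln (real N) / real N)\<^sup>2)"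
      proof (rule conjI)
        show "(INF \<Phi>\<in>NN 2 (nat \<lfloor>3 * real N\<rfloor>) 1 1. ereal (energy_norm \<epsilon> b (\<lambda>x. u x - R \<Phi> x)))
          \<le> ereal (C * ln (real N) / real N)"
          by (rule INF_lower2[OF PhiNN]) (use E1 in simp)
        show "(INF \<Phi>\<in>NN 2 (nat \<lfloor>3 * real N\<rfloor>) 1 1. ereal (L2_norm_I (\<lambda>x. u x - R \<Phi> x)))
          \<le> ereal (C * (ln (real N) / real N)\<^sup>2)"
          by (rule INF_lower2[OF PhiNN]) (use E2 in simp)
      qed
    qed
  qed
qed


end
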